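(* Let $\mathcal{H}_d$ be a complex Hilbert space of finite dimension $d$ with $2\leq d<\infty$. For any two observables $\mathsf{M}_1$ and $\mathsf{M}_2$ on $\mathcal{H}_d$ we have $$\frac{1}{2} < \frac{2+d}{2(1+d)} \leq \mathrm{jmd}(\mathsf{M}_1,\mathsf{M}_2).$$ In particular, there are no maximally incompatible pairs of observables on a finite dimensional Hilbert space.
   Context: An observable on a Hilbert space $\mathcal{H}$ with outcome space $\Omega$ (a Borel subset of some $\mathbb{R}^n$, with its Borel $\sigma$-algebra) is a normalized positive operator valued measure (POVM) $\mathsf{M}$ on $\Omega$, i.e. $\mathsf{M}(X)\geq 0$ are bounded operators, $\mathsf{M}$ is $\sigma$-additive in the weak operator topology and $\mathsf{M}(\Omega)=I$. An observable $\mathsf{T}$ is trivial if $\mathsf{T}(X)=\mu(X)I$ for some probability measure $\mu$ on $\Omega$. Two observables $\mathsf{M}_1,\mathsf{M}_2$ with outcome spaces $\Omega_1,\Omega_2$ are jointly measurable if there is an observable $\mathsf{M}$ on $\Omega_1\times\Omega_2$ with $\mathsf{M}(X\times\Omega_2)=\mathsf{M}_1(X)$ and $\mathsf{M}(\Omega_1\times Y)=\mathsf{M}_2(Y)$ for all Borel $X\subseteq\Omega_1$, $Y\subseteq\Omega_2$. The joint measurability region $J(\mathsf{M}_1,\mathsf{M}_2)$ is the set of $(\lambda,\mu)\in[0,1]\times[0,1]$ for which there exist trivial observables $\mathsf{T}_1$ on $\Omega_1$ and $\mathsf{T}_2$ on $\Omega_2$ such that $\lambda\mathsf{M}_1+(1-\lambda)\mathsf{T}_1$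 and $\mu\mathsf{M}_2+(1-\mu)\mathsf{T}_2$ are jointly measurable. The joint measurability degree $\mathrm{jmd}(\mathsf{M}_1,\mathsf{M}_2)$ is the greatest number $0\leq\lambda\leq 1$ such that $(\lambda,\lambda)\in J(\mathsf{M}_1,\mathsf{M}_2)$. The pair $\mathsf{M}_1,\mathsf{M}_2$ is maximally incompatible if $J(\mathsf{M}_1,\mathsf{M}_2)=\{(\lambda,\mu)\in[0,1]^2 : \lambda+\mu\leq 1\}$ (equivalently, $\mathrm{jmd}(\mathsf{M}_1,\mathsf{M}_2)=1/2$). *)

theory Defs
  imports "HOL-Probability.Probability"
begin

text \<open>The Hilbert space H_d is modelled as complex^'d (d = CARD('d)), operators on it
  as complex d x d matrices complex^'d^'d acting by matrix-vector multiplication.\<close>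

definition cinner :: "complex^'d::finite \<Rightarrow> complex^'d \<Rightarrow> complex" where
  "cinner v w = (\<Sum>i\<in>UNIV. cnj (v $ i) * w $ i)"

definition pos_op :: "complex^'d::finite^'d \<Rightarrow> bool" where
  "pos_op A \<longleftrightarrow> (\<forall>v. Im (cinner v (A *v v)) = 0 \<and> Re (cinner v (A *v v)) \<ge> 0)"

definition events :: "'a::topological_space set \<Rightarrow> 'a set set" where
  "events \<Omega> = {X. X \<in> sets borel \<and> X \<subseteq> \<Omega>}"

text \<open>Normalized POVM on outcome space Omega (only its values on Borel subsets of Omega matter).\<close>
definition observable :: "'a::topological_space set \<Rightarrow> ('a set \<Rightarrow> complex^'d::finite^'d) \<Rightarrow> bool" where
  "observable \<Omega> M \<longleftrightarrow>
     (\<forall>X\<in>events \<Omega>. pos_op (M X)) \<and>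
     (\<forall>A :: nat \<Rightarrow> 'a set. (\<forall>n. A n \<in> events \<Omega>) \<longrightarrow> disjoint_family A \<longrightarrow>
        (\<forall>v w. (\<lambda>n. cinner v (M (A n) *v w)) sums cinner v (M (\<Union>n. A n) *v w))) \<and>
     M \<Omega> = mat 1"

definition trivial_obs :: "'a::topological_space set \<Rightarrow> ('a set \<Rightarrow> complex^'d::finite^'d) \<Rightarrow> bool" where
  "trivial_obs \<Omega> T \<longleftrightarrow> observable \<Omega> T \<and>
     (\<exists>\<mu>. prob_space \<mu> \<and> space \<mu> = \<Omega> \<and> sets \<mu> = sets (restrict_space borel \<Omega>) \<and>
          (\<forall>X\<in>events \<Omega>. T X = mat (complex_of_real (measure \<mu> X))))"

definition jointly_measurable ::
  "'a::topological_space set \<Rightarrow> 'b::topological_space set \<Rightarrow>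
   ('a set \<Rightarrow> complex^'d::finite^'d) \<Rightarrow> ('b set \<Rightarrow> complex^'d^'d) \<Rightarrow> bool" where
  "jointly_measurable \<Omega>1 \<Omega>2 M1 M2 \<longleftrightarrow>
     (\<exists>M :: ('a \<times> 'b) set \<Rightarrow> complex^'d^'d. observable (\<Omega>1 \<times> \<Omega>2) M \<and>
        (\<forall>X\<in>events \<Omega>1. M (X \<times> \<Omega>2) = M1 X) \<and>
        (\<forall>Y\<in>events \<Omega>2. M (\<Omega>1 \<times> Y) = M2 Y))"

definition jm_region ::
  "'a::topological_space set \<Rightarrow> 'b::topological_space set \<Rightarrow>
   ('a set \<Rightarrow> complex^'d::finite^'d) \<Rightarrow> ('b set \<Rightarrow> complex^'d^'d) \<Rightarrow> (real \<times> real) set" where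
  "jm_region \<Omega>1 \<Omega>2 M1 M2 = {(a, b). a \<in> {0..1} \<and> b \<in> {0..1} \<and>
     (\<exists>T1 T2. trivial_obs \<Omega>1 T1 \<and> trivial_obs \<Omega>2 T2 \<and>
        jointly_measurable \<Omega>1 \<Omega>2 (\<lambda>X. a *\<^sub>R M1 X + (1 - a) *\<^sub>R T1 X)
                                   (\<lambda>Y. b *\<^sub>R M2 Y + (1 - b) *\<^sub>R T2 Y))}"

text \<open>Joint measurability degree: the greatest lambda in [0,1] with (lambda,lambda) in J,
  rendered as the supremum (which is that greatest element whenever it exists).\<close>
definition jmd ::
  "'a::topological_space set \<Rightarrow> 'b::topological_space set \<Rightarrow>
   ('a set \<Rightarrow> complex^'d::finite^'d) \<Rightarrow> ('b set \<Rightarrow> complex^'d^'d) \<Rightarrow> real" where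
  "jmd \<Omega>1 \<Omega>2 M1 M2 = Sup {a. a \<in> {0..1} \<and> (a, a) \<in> jm_region \<Omega>1 \<Omega>2 M1 M2}"

definition maximally_incompatible ::
  "'a::topological_space set \<Rightarrow> 'b::topological_space set \<Rightarrow>
   ('a set \<Rightarrow> complex^'d::finite^'d) \<Rightarrow> ('b set \<Rightarrow> complex^'d^'d) \<Rightarrow> bool" where
  "maximally_incompatible \<Omega>1 \<Omega>2 M1 M2 \<longleftrightarrow>
     jm_region \<Omega>1 \<Omega>2 M1 M2 = {(a, b). a \<in> {0..1} \<and> b \<in> {0..1} \<and> a + b \<le> 1}"

end

theory Submission imports Defs begin

definition sq :: "complex^'d::finite^'d \<Rightarrow> complex^'d \<Rightarrow> complex^'d \<Rightarrow> complex" where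
  "sq A v w = cinner v (A *v w)"

lemma sq_expand: "sq A v w = (\<Sum>i\<in>UNIV. \<Sum>j\<in>UNIV. cnj (v$i) * A$i$j * w$j)"
  unfolding sq_def cinner_def matrix_vector_mult_def
  by (simp add: sum_distrib_left mult.assoc)

lemma cinner_axis: "cinner (axis i 1) y = y $ i"
proof -
  have "cinner (axis i 1) y = (\<Sum>k\<in>UNIV. if k = i then y $ k else 0)"
    unfolding cinner_def axis_def by (intro sum.cong) auto
  then show ?thesis by simp
qed

lemma mv_axis: "(A *v axis j 1) $ i = A $ i $ j"
proof -
  have e: "(\<lambda>k. A$i$k * (if k = j then 1 else 0)) = (\<lambda>k. if k = j then A$i$k else 0)" by auto
  have "(A *v axis j 1) $ i = (\<Sum>k\<in>UNIV. A$i$k * (if k = j then 1 else 0))"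
    unfolding matrix_vector_mult_def axis_def by simp
  also have "\<dots> = A $ i $ j" unfolding e by simp
  finally show ?thesis .
qed

lemma entry_sq: "A $ i $ j = sq A (axis i 1) (axis j 1)"
  unfolding sq_def cinner_axis mv_axis ..

lemma sq_lin: "sq A (a + c *s b) (a + c *s b) = sq A a a + c * sq A a b + cnj c * sq A b a + cnj c * c * sq A b b"
  unfolding sq_expand
  by (simp add: algebra_simps sum.distrib sum_distrib_left)

lemma pos_sq: "pos_op A \<Longrightarrow> Im (sq A v v) = 0 \<and> Re (sq A v v) \<ge> 0"
  unfolding pos_op_def sq_def by blast

lemma pos_sq_real: "pos_op A \<Longrightarrow> sq A v v = complex_of_real (Re (sq A v v))"
  using pos_sq[of A v] by (simp add: complex_eq_iff)

lemma herm: assumes "pos_op A" shows "sq A v w = cnj (sq A w v)"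
proof -
  have 1: "Im (sq A (v + 1 *s w) (v + 1 *s w)) = 0" using pos_sq[OF assms] by blast
  have 2: "Im (sq A (v + \<i> *s w) (v + \<i> *s w)) = 0" using pos_sq[OF assms] by blast
  have 3: "Im (sq A v v) = 0" "Im (sq A w w) = 0" using pos_sq[OF assms] by blast+
  from 1 2 3 show ?thesis unfolding sq_lin by (simp add: complex_eq_iff)
qed

lemma herm_entry: "pos_op A \<Longrightarrow> A $ i $ j = cnj (A $ j $ i)"
  unfolding entry_sq[of A i j] entry_sq[of A j i] by (rule herm)

lemma CS: assumes "pos_op A"
  shows "(cmod (sq A w v))^2 \<le> Re (sq A w w) * Re (sq A v v)"
proof -
  define b where "b = sq A w v"
  define a where "a = Re (sq A w w)"
  define c where "c = Re (sq A v v)"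
  define B where "B = (cmod b)^2"
  have bb: "b * cnj b = complex_of_real B" unfolding B_def by (rule complex_norm_square[symmetric])
  have a0: "a \<ge> 0" "c \<ge> 0" using pos_sq[OF assms] unfolding a_def c_def by auto
  have key: "0 \<le> c - 2*t*B + t^2*B*a" for t :: real
  proof -
    define z where "z = - (complex_of_real t * b)"
    have "0 \<le> Re (sq A (v + z *s w) (v + z *s w))" using pos_sq[OF assms] by blast
    also have "sq A (v + z *s w) (v + z *s w) = sq A v v + z * cnj b + cnj z * b + cnj z * z * sq A w w"
      unfolding sq_lin b_def using herm[OF assms, of v w] by simp
    also have "z * cnj b = - complex_of_real (t*B)" unfolding z_def using bb
      by (simp add: mult.assoc)
    also have "cnj z * b = - complex_of_real (t*B)" unfolding z_def using bb
      by (simp add: mult.assoc mult.commute[of "cnj b"])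
    also have "cnj z * z = complex_of_real (t^2*B)" unfolding z_def using bb
      by (simp add: power2_eq_square algebra_simps)
    finally have "0 \<le> Re (sq A v v) - t*B - t*B + t^2*B * Re (sq A w w)"
      using pos_sq[OF assms, of w] by simp
    then show ?thesis unfolding a_def c_def by (simp add: algebra_simps)
  qed
  show ?thesis
  proof (cases "a = 0")
    case True
    show ?thesis
    proof (rule ccontr)
      assume "\<not> ?thesis"
      then have "B > 0" using True a0 unfolding B_def b_def a_def c_def by simp
      then show False using key[of "(c+1)/(2*B)"] True by (simp add: field_simps)
    qed
  next
    case False
    then have "a > 0" using a0 by simp
    have "0 \<le> c - 2*(1/a)*B + (1/a)^2*B*a" by (rule key)
    then have "0 \<le> c - B/a" using \<open>a > 0\<close> by (simp add: field_simps power2_eq_square)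
    then have "B \<le> a * c" using \<open>a > 0\<close> by (simp add: field_simps)
    then show ?thesis unfolding B_def b_def a_def c_def .
  qed
qed

definition trc :: "complex^'d::finite^'d \<Rightarrow> complex" where
  "trc A = (\<Sum>i\<in>UNIV. A$i$i)"

definition Phi :: "complex^'d::finite^'d \<Rightarrow> complex^'d^'d \<Rightarrow> complex^'d^'d" where
  "Phi A B = (\<chi> i j. (trc B * A$i$j + trc A * B$i$j + (A ** B)$i$j + (B ** A)$i$j)
      / (2 * (1 + of_nat CARD('d))))"

lemma cinner_cnj: "cnj (cinner x y) = cinner y x"
  unfolding cinner_def by (simp add: mult.commute)

lemma sq_comb: "sq (\<chi> i j. (x * A$i$j + y * B$i$j + C$i$j + D$i$j) / c) v v
   = (x * sq A v v + y * sq B v v + sq C v v + sq D v v) / c"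
  unfolding sq_expand
  by (simp add: algebra_simps sum.distrib sum_distrib_left sum_divide_distrib diff_divide_distrib add_divide_distrib)

lemma sq_mult: "sq (A ** B) v v = sq A v (B *v v)"
  unfolding sq_def by (simp add: matrix_vector_mul_assoc)

lemma sq_herm_move: "pos_op A \<Longrightarrow> sq A v y = cinner (A *v v) y"
  using herm[of A v y] unfolding sq_def[of A y v] cinner_cnj by simp

lemma pos_mat1: "pos_op (mat 1 :: complex^'d::finite^'d)"
  unfolding pos_op_def cinner_def matrix_vector_mul_lid
  by (simp add: sum_nonneg)

lemma sq_mat1: "sq (mat 1) x y = cinner x y"
  unfolding sq_def matrix_vector_mul_lid ..

lemma trc_real: assumes "pos_op A" shows "trc A = complex_of_real (Re (trc A))" "Re (trc A) \<ge> 0"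
proof -
  have "A $ i $ i = complex_of_real (Re (A $ i $ i))" "Re (A $ i $ i) \<ge> 0" for i
    using pos_sq[OF assms, of "axis i 1"] unfolding entry_sq[of A i i] by (auto simp: complex_eq_iff)
  then show "trc A = complex_of_real (Re (trc A))" "Re (trc A) \<ge> 0"
    unfolding trc_def by (auto simp: complex_eq_iff Re_sum Im_sum intro!: sum_nonneg)
qed

lemma norm_bound: assumes "pos_op A"
  shows "Re (cinner (A *v v) (A *v v)) \<le> Re (trc A) * Re (sq A v v)"
proof -
  have "Re (cinner (A *v v) (A *v v)) = (\<Sum>i\<in>UNIV. (cmod (sq A (axis i 1) v))^2)"
    unfolding sq_def cinner_axis unfolding cinner_def Re_sum
    by (intro sum.cong) (auto simp: complex_norm_square[symmetric] mult.commute)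
  also have "\<dots> \<le> (\<Sum>i\<in>UNIV. Re (sq A (axis i 1) (axis i 1)) * Re (sq A v v))"
    by (intro sum_mono CS[OF assms])
  also have "\<dots> = Re (trc A) * Re (sq A v v)"
    unfolding trc_def Re_sum sum_distrib_right entry_sq ..
  finally show ?thesis .
qed

lemma Phi_pos: fixes A B :: "complex^'d::finite^'d" assumes A: "pos_op A" and B: "pos_op B" shows "pos_op (Phi A B)"
  unfolding pos_op_def
proof
  fix v
  define a where "a = A *v v"
  define b where "b = B *v v"
  define qA where "qA = Re (sq A v v)"
  define qB where "qB = Re (sq B v v)"
  define tA where "tA = Re (trc A)"
  define tB where "tB = Re (trc B)"
  define c :: real where "c = 2 * (1 + real CARD('d))"
  have c0: "c > 0" unfolding c_def by simp
  have e: "cinner v (Phi A B *v v) = complex_of_real ((tB * qA + tA * qB + 2 * Re (cinner a b)) / c)"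
  proof -
    have "cinner v (Phi A B *v v) = sq (Phi A B) v v" unfolding sq_def ..
    also have "\<dots> = (trc B * sq A v v + trc A * sq B v v + sq (A ** B) v v + sq (B ** A) v v) / (2 * (1 + of_nat CARD('d)))"
      unfolding Phi_def by (rule sq_comb)
    also have "sq (A ** B) v v = cinner a b" unfolding sq_mult a_def b_def by (rule sq_herm_move[OF A])
    also have "sq (B ** A) v v = cnj (cinner a b)" unfolding sq_mult a_def b_def sq_herm_move[OF B] cinner_cnj ..
    also have "trc B = complex_of_real tB" unfolding tB_def by (rule trc_real(1)[OF B])
    also have "trc A = complex_of_real tA" unfolding tA_def by (rule trc_real(1)[OF A])
    also have "sq A v v = complex_of_real qA" unfolding qA_def by (rule pos_sq_real[OF A])
    also have "sq B v v = complex_of_real qB" unfolding qB_def by (rule pos_sq_real[OF B])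
    finally show ?thesis unfolding c_def by (simp add: complex_eq_iff)
  qed
  have q0: "qA \<ge> 0" "qB \<ge> 0" "tA \<ge> 0" "tB \<ge> 0"
    unfolding qA_def qB_def tA_def tB_def using pos_sq[OF A] pos_sq[OF B] trc_real(2)[OF A] trc_real(2)[OF B] by auto
  have "(cmod (cinner a b))^2 \<le> Re (cinner a a) * Re (cinner b b)"
    using CS[OF pos_mat1, of a b] unfolding sq_mat1 .
  also have "\<dots> \<le> (tA * qA) * (tB * qB)"
    using norm_bound[OF A, of v] norm_bound[OF B, of v] q0 unfolding a_def b_def tA_def tB_def qA_def qB_def
    by (intro mult_mono) (auto simp: cinner_def Re_sum intro!: sum_nonneg)
  finally have h: "(cmod (cinner a b))^2 \<le> (tA * qA) * (tB * qB)" .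
  have "(2 * Re (cinner a b))^2 \<le> 4 * (cmod (cinner a b))^2"
  proof -
    have "(Re (cinner a b))^2 \<le> (cmod (cinner a b))^2"
      using abs_Re_le_cmod[of "cinner a b"] by (metis abs_le_square_iff abs_norm_cancel)
    then show ?thesis by (simp add: power_mult_distrib)
  qed
  also have "\<dots> \<le> (tB * qA + tA * qB)^2"
  proof -
    have "4 * (cmod (cinner a b))^2 \<le> 4 * ((tB * qA) * (tA * qB))" using h by (simp add: mult_ac)
    also have "\<dots> \<le> (tB * qA + tA * qB)^2"
    proof -
      have "0 \<le> (tB * qA - tA * qB)^2" by simp
      then show ?thesis unfolding power2_eq_square by (simp add: algebra_simps)
    qed
    finally show ?thesis .
  qed
  finally have "\<bar>2 * Re (cinner a b)\<bar> \<le> \<bar>tB * qA + tA * qB\<bar>" by (simp only: abs_le_square_iff)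
  then have "0 \<le> tB * qA + tA * qB + 2 * Re (cinner a b)" using q0 by auto
  then show "Im (cinner v (Phi A B *v v)) = 0 \<and> 0 \<le> Re (cinner v (Phi A B *v v))"
    unfolding e using c0 by simp
qed

definition ca :: "('x::topological_space set \<Rightarrow> 'c::real_normed_vector) \<Rightarrow> bool" where
  "ca f \<longleftrightarrow> (\<forall>A. (\<forall>n. A n \<in> sets borel) \<longrightarrow> disjoint_family A \<longrightarrow> (\<lambda>n. f (A n)) sums f (\<Union>n. A n))"

lemma caD: "ca f \<Longrightarrow> (\<And>n. A n \<in> sets borel) \<Longrightarrow> disjoint_family A \<Longrightarrow> (\<lambda>n. f (A n)) sums f (\<Union>n. A n)"
  unfolding ca_def by blast

lemma ca_empty: assumes "ca f" shows "f {} = 0"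
proof -
  have "(\<lambda>n. f {}) sums f {}" using caD[OF assms, of "\<lambda>n. {}"] by (simp add: disjoint_family_on_def)
  then have "(\<lambda>n. f {}) \<longlonglongrightarrow> 0" using summable_LIMSEQ_zero sums_summable by blast
  then show ?thesis using LIMSEQ_const_iff by blast
qed

lemma ca_Un: assumes "ca f" "A \<in> sets borel" "B \<in> sets borel" "A \<inter> B = {}"
  shows "f (A \<union> B) = f A + f B"
proof -
  define F where "F n = (if n = 0 then A else if n = 1 then B else {})" for n :: nat
  have "(\<lambda>n. f (F n)) sums f (\<Union>n. F n)"
    by (rule caD[OF assms(1)]) (use assms in \<open>auto simp: F_def disjoint_family_on_def\<close>)
  moreover have "(\<Union>n. F n) = A \<union> B" unfolding F_def by (auto split: if_splits)
  moreover have "(\<lambda>n. f (F n)) sums (\<Sum>n\<in>{0,1}. f (F n))"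
    by (rule sums_finite) (auto simp: F_def ca_empty[OF assms(1)])
  ultimately show ?thesis using sums_unique2 by (fastforce simp: F_def)
qed

lemma ca_compl: assumes "ca f" "A \<in> sets borel" shows "f (UNIV - A) = f UNIV - f A"
  using ca_Un[OF assms(1) assms(2), of "UNIV - A"] assms(2) by (auto simp: Un_absorb)

lemma ca_compl': assumes "ca f" "A \<in> sets borel" shows "f (UNIV - A) = f UNIV - f A"
proof -
  have "f (A \<union> (UNIV - A)) = f A + f (UNIV - A)"
    by (rule ca_Un[OF assms]) (use assms in auto)
  then show ?thesis by (simp add: algebra_simps)
qed

abbreviation rect :: "('a::topological_space \<times> 'b::topological_space) set set" where
  "rect \<equiv> {a \<times> b | a b. a \<in> sets borel \<and> b \<in> sets borel}"

lemma borel_rect: "sets (borel :: ('a::second_countable_topology \<times> 'b::second_countable_topology) measure) = sigma_sets UNIV rect"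
proof -
  have "sets (borel :: ('a \<times> 'b) measure) = sets (borel \<Otimes>\<^sub>M borel)" by (metis borel_prod)
  also have "\<dots> = sigma_sets UNIV rect" unfolding sets_pair_measure by simp
  finally show ?thesis .
qed

lemma uniq:
  fixes f g :: "('a::second_countable_topology \<times> 'b::second_countable_topology) set \<Rightarrow> 'c::real_normed_vector"
  assumes f: "ca f" and g: "ca g"
    and r: "\<And>X Y. X \<in> sets borel \<Longrightarrow> Y \<in> sets borel \<Longrightarrow> f (X \<times> Y) = g (X \<times> Y)"
    and Z: "Z \<in> sets borel"
  shows "f Z = g Z"
proof -
  have Z': "Z \<in> sigma_sets UNIV rect" using Z borel_rect by blast
  have IS: "Int_stable (rect :: ('a \<times> 'b) set set)"
    using Int_stable_pair_measure_generator[of "borel::'a measure" "borel::'b measure"] by simp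
  have cl: "(rect :: ('a \<times> 'b) set set) \<subseteq> Pow UNIV" by auto
  show ?thesis using Z'
  proof (induction rule: sigma_sets_induct_disjoint[OF IS cl, consumes 1, case_names basic empty compl union])
    case (basic A) then show ?case using r by auto
  next
    case empty then show ?case using ca_empty[OF f] ca_empty[OF g] by simp
  next
    case (compl A)
    then have "A \<in> sets borel" using borel_rect by blast
    then show ?case using compl ca_compl'[OF f] ca_compl'[OF g] r[of UNIV UNIV] by simp
  next
    case (union A)
    then have "\<And>n. A n \<in> sets borel" using borel_rect by blast
    then show ?case using union caD[OF f, of A] caD[OF g, of A] sums_unique2 by force
  qed
qed

lemma const_sums_zero: "(\<lambda>n. c) sums (c::'c::real_normed_vector) \<Longrightarrow> c = 0"
proof -
  assume "(\<lambda>n. c) sums c"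
  then have "(\<lambda>n. c) \<longlonglongrightarrow> 0" using summable_LIMSEQ_zero sums_summable by blast
  then show ?thesis using LIMSEQ_const_iff by blast
qed

lemma mk_measure:
  fixes M :: "'x measure" and f :: "'x set \<Rightarrow> real"
  assumes nn: "\<And>X. X \<in> sets M \<Longrightarrow> f X \<ge> 0"
    and cad: "\<And>A. range A \<subseteq> sets M \<Longrightarrow> disjoint_family A \<Longrightarrow> (\<lambda>n. f (A n)) sums f (\<Union>n. A n)"
  shows "\<exists>N. sets N = sets M \<and> space N = space M \<and> finite_measure N \<and> (\<forall>X\<in>sets M. measure N X = f X)"
proof -
  define N where "N = measure_of (space M) (sets M) (\<lambda>X. ennreal (f X))"
  have sa: "sigma_algebra (space M) (sets M)" ..
  have f0: "f {} = 0"
    using cad[of "\<lambda>n. {}"] const_sums_zero by (auto simp: disjoint_family_on_def)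
  have pos: "positive (sets M) (\<lambda>X. ennreal (f X))" unfolding positive_def by (simp add: f0)
  have cadd: "countably_additive (sets M) (\<lambda>X. ennreal (f X))"
    unfolding countably_additive_def
  proof (intro allI impI)
    fix A :: "nat \<Rightarrow> 'x set" assume A: "range A \<subseteq> sets M" "disjoint_family A"
    then have s: "(\<lambda>n. f (A n)) sums f (\<Union>n. A n)" by (rule cad)
    have "(\<Sum>i. ennreal (f (A i))) = ennreal (\<Sum>i. f (A i))"
      using A s nn by (intro suminf_ennreal2) (auto simp: sums_summable)
    then show "(\<Sum>i. ennreal (f (A i))) = ennreal (f (\<Union>i. A i))" using s sums_unique by metis
  qed
  have sN: "sets N = sets M" and spN: "space N = space M"
    unfolding N_def using sa by (auto simp: sigma_algebra.sets_measure_of_eq sigma_algebra.space_measure_of_eq)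
  have eN: "emeasure N X = ennreal (f X)" if "X \<in> sets M" for X
    unfolding N_def by (rule emeasure_measure_of_sigma[OF sa pos cadd that])
  have "finite_measure N" by (rule finite_measureI) (simp add: eN spN)
  moreover have "\<forall>X\<in>sets M. measure N X = f X" using eN nn by (simp add: measure_def)
  ultimately show ?thesis using sN spN by blast
qed

lemma semiring_rect: "semiring_of_sets UNIV (rect :: ('a::topological_space \<times> 'b::topological_space) set set)"
proof
  show "rect \<subseteq> Pow UNIV" by auto
  show "{} \<in> rect" by blast
  fix a b assume a: "a \<in> (rect :: ('a \<times> 'b) set set)" and b: "b \<in> (rect :: ('a \<times> 'b) set set)"
  from a obtain A B where AB: "a = A \<times> B" "A \<in> sets borel" "B \<in> sets borel" by blast
  from b obtain C D where CD: "b = C \<times> D" "C \<in> sets borel" "D \<in> sets borel" by blast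
  show "a \<inter> b \<in> rect" using AB CD by (auto simp: Times_Int_Times)
  let ?C = "{(A - C) \<times> B, (A \<inter> C) \<times> (B - D)}"
  have "?C \<subseteq> rect" using AB CD by auto
  moreover have "disjoint ?C" unfolding disjoint_def by auto
  moreover have "a - b = \<Union>?C" using AB CD by auto
  ultimately show "\<exists>C\<subseteq>rect. finite C \<and> disjoint C \<and> a - b = \<Union>C" by (intro exI[of _ ?C]) auto
qed

lemma nonneg:
  fixes f :: "('a::second_countable_topology \<times> 'b::second_countable_topology) set \<Rightarrow> real"
  assumes f: "ca f"
    and r: "\<And>X Y. X \<in> sets borel \<Longrightarrow> Y \<in> sets borel \<Longrightarrow> f (X \<times> Y) \<ge> 0"
    and Z: "Z \<in> sets borel"
  shows "f Z \<ge> 0"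
proof -
  let ?R = "rect :: ('a \<times> 'b) set set"
  interpret semiring_of_sets UNIV "rect :: ('a \<times> 'b) set set" by (rule semiring_rect)
  have rb: "R \<in> rect \<Longrightarrow> R \<in> sets borel" for R :: "('a \<times> 'b) set"
    unfolding borel_rect by (rule sigma_sets.Basic)
  have rnn: "R \<in> rect \<Longrightarrow> f R \<ge> 0" for R :: "('a \<times> 'b) set"
  proof -
    assume "R \<in> rect"
    then obtain X Y where "R = X \<times> Y" "X \<in> sets borel" "Y \<in> sets borel" by blast
    then show ?thesis using r by simp
  qed
  have pos: "positive rect (\<lambda>R. ennreal (f R))" unfolding positive_def by (simp add: ca_empty[OF f])
  have cadd: "countably_additive rect (\<lambda>R. ennreal (f R))"
    unfolding countably_additive_def
  proof (intro allI impI)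
    fix A :: "nat \<Rightarrow> ('a \<times> 'b) set" assume A: "range A \<subseteq> rect" "disjoint_family A" "(\<Union>i. A i) \<in> rect"
    have An: "\<And>n. A n \<in> sets borel" by (rule rb[OF range_subsetD[OF A(1)]])
    have s: "(\<lambda>n. f (A n)) sums f (\<Union>n. A n)" using An A(2) by (rule caD[OF f])
    have Ann: "\<And>i. 0 \<le> f (A i)" by (rule rnn[OF range_subsetD[OF A(1)]])
    have "(\<Sum>i. ennreal (f (A i))) = ennreal (\<Sum>i. f (A i))"
      by (rule suminf_ennreal2[OF Ann sums_summable[OF s]])
    then show "(\<Sum>i. ennreal (f (A i))) = ennreal (f (\<Union>i. A i))" using sums_unique[OF s] by simp
  qed
  obtain mu where mu: "\<forall>s\<in>rect. mu s = ennreal (f s)" "measure_space UNIV (sigma_sets UNIV ?R) mu"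
    using caratheodory[OF pos cadd] by blast
  define N where "N = measure_of UNIV (sigma_sets UNIV ?R) mu"
  have sa: "sigma_algebra UNIV (sigma_sets UNIV ?R)" and mpos: "positive (sigma_sets UNIV ?R) mu"
    and mca: "countably_additive (sigma_sets UNIV ?R) mu"
    using mu(2) by (auto simp: measure_space_def)
  have sN: "sets N = sets borel" unfolding N_def borel_rect
    by (rule sigma_algebra.sets_measure_of_eq[OF sa])
  have spN: "space N = UNIV" unfolding N_def by (rule sigma_algebra.space_measure_of_eq[OF sa])
  have eN: "emeasure N X = mu X" if "X \<in> sigma_sets UNIV ?R" for X
    unfolding N_def by (rule emeasure_measure_of_sigma[OF sa mpos mca that])
  have U: "(UNIV :: ('a \<times> 'b) set) \<in> rect" by (auto intro!: exI[of _ UNIV])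
  have "emeasure N UNIV = ennreal (f UNIV)"
    using eN[of UNIV] mu(1) U by (simp add: sigma_sets.Basic)
  then have fin: "finite_measure N" by (intro finite_measureI) (simp add: spN)
  define g where "g X = measure N X" for X
  have gca: "ca g" unfolding ca_def g_def
    using finite_measure.finite_measure_UNION[OF fin] sN by auto
  have gr: "f (X \<times> Y) = g (X \<times> Y)" if "X \<in> sets borel" "Y \<in> sets borel" for X Y
  proof -
    have R: "X \<times> Y \<in> rect" using that by blast
    then have "emeasure N (X \<times> Y) = ennreal (f (X \<times> Y))" using eN mu(1) by (simp add: sigma_sets.Basic)
    then show ?thesis unfolding g_def measure_def using rnn[OF R] by simp
  qed
  have "f Z = g Z" by (rule uniq[OF f gca gr Z])
  then show ?thesis unfolding g_def by simp
qed

definition val :: "(complex \<times> 'x measure) list \<Rightarrow> 'x set \<Rightarrow> complex" where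
  "val L Z = (\<Sum>p\<leftarrow>L. fst p * complex_of_real (measure (snd p) Z))"

definition goodL :: "(complex \<times> 'x::topological_space measure) list \<Rightarrow> bool" where
  "goodL L \<longleftrightarrow> (\<forall>p\<in>set L. finite_measure (snd p) \<and> sets (snd p) = sets borel)"

definition comb :: "('x::topological_space set \<Rightarrow> complex) \<Rightarrow> bool" where
  "comb f \<longleftrightarrow> (\<exists>L. goodL L \<and> (\<forall>Z\<in>sets borel. f Z = val L Z))"

lemma val_Nil[simp]: "val [] Z = 0" by (simp add: val_def)
lemma val_Cons[simp]: "val (p # L) Z = fst p * complex_of_real (measure (snd p) Z) + val L Z"
  by (simp add: val_def)
lemma val_append[simp]: "val (L1 @ L2) Z = val L1 Z + val L2 Z" by (simp add: val_def)
lemma goodL_Nil[simp]: "goodL []" by (simp add: goodL_def)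
lemma goodL_Cons[simp]: "goodL (p # L) \<longleftrightarrow> finite_measure (snd p) \<and> sets (snd p) = sets borel \<and> goodL L"
  by (auto simp: goodL_def)
lemma goodL_append[simp]: "goodL (L1 @ L2) \<longleftrightarrow> goodL L1 \<and> goodL L2" by (auto simp: goodL_def)

lemma val_sums:
  assumes "goodL L" "\<And>n. A n \<in> sets borel" "disjoint_family A"
  shows "(\<lambda>n. val L (A n)) sums val L (\<Union>n. A n)"
  using assms(1)
proof (induction L)
  case Nil then show ?case by simp
next
  case (Cons p L)
  then have fm: "finite_measure (snd p)" and sp: "sets (snd p) = sets borel" and g: "goodL L" by auto
  have "(\<lambda>n. measure (snd p) (A n)) sums measure (snd p) (\<Union>n. A n)"
    using finite_measure.finite_measure_UNION[OF fm, of A] assms(2,3) sp by auto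
  then have "(\<lambda>n. complex_of_real (measure (snd p) (A n))) sums complex_of_real (measure (snd p) (\<Union>n. A n))"
    by (simp only: sums_of_real_iff)
  then have "(\<lambda>n. fst p * complex_of_real (measure (snd p) (A n))) sums (fst p * complex_of_real (measure (snd p) (\<Union>n. A n)))"
    by (rule sums_mult)
  from sums_add[OF this Cons.IH[OF g]] show ?case by simp
qed

lemma comb_sums:
  assumes "comb f" "\<And>n. A n \<in> sets borel" "disjoint_family A"
  shows "(\<lambda>n. f (A n)) sums f (\<Union>n. A n)"
proof -
  obtain L where L: "goodL L" "\<And>Z. Z \<in> sets borel \<Longrightarrow> f Z = val L Z" using assms(1) unfolding comb_def by blast
  have U: "(\<Union>n. A n) \<in> sets borel" using assms(2) by auto
  show ?thesis using val_sums[OF L(1) assms(2,3)] L(2)[OF U] L(2)[OF assms(2)] by simp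
qed

lemma comb_add: assumes "comb f" "comb g" shows "comb (\<lambda>Z. f Z + g Z)"
proof -
  obtain L1 where L1: "goodL L1" "\<forall>Z\<in>sets borel. f Z = val L1 Z" using assms(1) unfolding comb_def by blast
  obtain L2 where L2: "goodL L2" "\<forall>Z\<in>sets borel. g Z = val L2 Z" using assms(2) unfolding comb_def by blast
  show ?thesis unfolding comb_def using L1 L2 by (intro exI[of _ "L1 @ L2"]) simp
qed

lemma val_scale: "val (map (\<lambda>p. (c * fst p, snd p)) L) Z = c * val L Z"
  by (induction L) (auto simp: algebra_simps)

lemma goodL_scale: "goodL (map (\<lambda>p. (c * fst p, snd p)) L) = goodL L"
  by (auto simp: goodL_def)

lemma comb_scale: assumes "comb f" shows "comb (\<lambda>Z. c * f Z)"
proof -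
  obtain L1 where L1: "goodL L1" "\<forall>Z\<in>sets borel. f Z = val L1 Z" using assms(1) unfolding comb_def by blast
  show ?thesis unfolding comb_def using L1
    by (intro exI[of _ "map (\<lambda>p. (c * fst p, snd p)) L1"]) (simp add: goodL_scale val_scale)
qed

lemma comb_zero: "comb (\<lambda>Z. 0)"
  unfolding comb_def by (intro exI[of _ "[]"]) simp

lemma comb_sum: "finite I \<Longrightarrow> (\<And>i. i \<in> I \<Longrightarrow> comb (F i)) \<Longrightarrow> comb (\<lambda>Z. \<Sum>i\<in>I. F i Z)"
  by (induction I rule: finite_induct) (auto intro: comb_add comb_zero)

lemma comb_single: "finite_measure \<mu> \<Longrightarrow> sets \<mu> = sets borel \<Longrightarrow> comb (\<lambda>Z. complex_of_real (measure \<mu> Z))"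
  unfolding comb_def by (intro exI[of _ "[(1, \<mu>)]"]) simp

definition prodable :: "('a::second_countable_topology set \<Rightarrow> 'b::second_countable_topology set \<Rightarrow> complex) \<Rightarrow> bool" where
  "prodable F \<longleftrightarrow> (\<exists>h :: ('a \<times> 'b) set \<Rightarrow> complex. comb h \<and> (\<forall>X\<in>sets borel. \<forall>Y\<in>sets borel. h (X \<times> Y) = F X Y))"

lemma prodable_add: "prodable F \<Longrightarrow> prodable G \<Longrightarrow> prodable (\<lambda>X Y. F X Y + G X Y)"
  unfolding prodable_def
proof (elim exE conjE)
  fix h g :: "('a \<times> 'b) set \<Rightarrow> complex"
  assume "comb h" "\<forall>X\<in>sets borel. \<forall>Y\<in>sets borel. h (X \<times> Y) = F X Y"
    "comb g" "\<forall>X\<in>sets borel. \<forall>Y\<in>sets borel. g (X \<times> Y) = G X Y"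
  then show "\<exists>h. comb h \<and> (\<forall>X\<in>sets borel. \<forall>Y\<in>sets borel. h (X \<times> Y) = F X Y + G X Y)"
    by (intro exI[of _ "\<lambda>Z. h Z + g Z"]) (auto intro: comb_add)
qed

lemma prodable_scale: "prodable F \<Longrightarrow> prodable (\<lambda>X Y. c * F X Y)"
  unfolding prodable_def
proof (elim exE conjE)
  fix h :: "('a \<times> 'b) set \<Rightarrow> complex"
  assume "comb h" "\<forall>X\<in>sets borel. \<forall>Y\<in>sets borel. h (X \<times> Y) = F X Y"
  then show "\<exists>h. comb h \<and> (\<forall>X\<in>sets borel. \<forall>Y\<in>sets borel. h (X \<times> Y) = c * F X Y)"
    by (intro exI[of _ "\<lambda>Z. c * h Z"]) (auto intro: comb_scale)
qed

lemma prodable_zero: "prodable (\<lambda>X Y. 0)"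
  unfolding prodable_def by (intro exI[of _ "\<lambda>Z. 0"]) (auto intro: comb_zero)

lemma prodable_sum: "finite I \<Longrightarrow> (\<And>i. i \<in> I \<Longrightarrow> prodable (F i)) \<Longrightarrow> prodable (\<lambda>X Y. \<Sum>i\<in>I. F i X Y)"
  by (induction I rule: finite_induct) (auto intro: prodable_add prodable_zero)

lemma prodable_single:
  fixes \<mu> :: "'a::second_countable_topology measure" and \<nu> :: "'b::second_countable_topology measure"
  assumes "finite_measure \<mu>" "sets \<mu> = sets borel" "finite_measure \<nu>" "sets \<nu> = sets borel"
  shows "prodable (\<lambda>X Y. complex_of_real (measure \<mu> X) * complex_of_real (measure \<nu> Y))"
proof -
  interpret mu: finite_measure \<mu> by fact
  interpret nu: finite_measure \<nu> by fact
  have fm: "finite_measure (\<mu> \<Otimes>\<^sub>M \<nu>)" by (rule finite_measure_pair_measure) fact+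
  have sp: "sets (\<mu> \<Otimes>\<^sub>M \<nu>) = sets (borel :: ('a \<times> 'b) measure)"
  proof -
    have "sets (\<mu> \<Otimes>\<^sub>M \<nu>) = sets (borel \<Otimes>\<^sub>M borel :: ('a \<times> 'b) measure)"
      by (rule sets_pair_measure_cong) (use assms in auto)
    then show ?thesis by (metis borel_prod)
  qed
  have m: "measure (\<mu> \<Otimes>\<^sub>M \<nu>) (X \<times> Y) = measure \<mu> X * measure \<nu> Y"
    if "X \<in> sets borel" "Y \<in> sets borel" for X Y
  proof -
    have "emeasure (\<mu> \<Otimes>\<^sub>M \<nu>) (X \<times> Y) = emeasure \<mu> X * emeasure \<nu> Y"
      by (rule nu.emeasure_pair_measure_Times) (use that assms in auto)
    then show ?thesis unfolding measure_def by (simp add: enn2real_mult)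
  qed
  show ?thesis unfolding prodable_def
    by (intro exI[of _ "\<lambda>Z. complex_of_real (measure (\<mu> \<Otimes>\<^sub>M \<nu>) Z)"] conjI comb_single fm sp)
       (simp add: m)
qed

lemma prodable_val:
  fixes L1 :: "(complex \<times> 'a::second_countable_topology measure) list"
    and L2 :: "(complex \<times> 'b::second_countable_topology measure) list"
  assumes "goodL L1" "goodL L2"
  shows "prodable (\<lambda>X Y. val L1 X * val L2 Y)"
  using assms(1)
proof (induction L1)
  case Nil then show ?case by (simp add: prodable_zero)
next
  case (Cons p L1)
  then have p: "finite_measure (snd p)" "sets (snd p) = sets borel" and g: "goodL L1" by auto
  have "prodable (\<lambda>X Y. complex_of_real (measure (snd p) X) * val L2 Y)"
    using assms(2)
  proof (induction L2)
    case Nil then show ?case by (simp add: prodable_zero)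
  next
    case (Cons q L2)
    then have q: "finite_measure (snd q)" "sets (snd q) = sets borel" and g2: "goodL L2" by auto
    have "prodable (\<lambda>X Y. fst q * (complex_of_real (measure (snd p) X) * complex_of_real (measure (snd q) Y)))"
      by (rule prodable_scale[OF prodable_single[OF p q]])
    from prodable_add[OF this Cons.IH[OF g2]] show ?case by (simp add: algebra_simps)
  qed
  from prodable_add[OF prodable_scale[OF this, of "fst p"] Cons.IH[OF g]] show ?case
    by (simp add: algebra_simps)
qed

lemma prodable_mult:
  fixes f :: "'a::second_countable_topology set \<Rightarrow> complex" and g :: "'b::second_countable_topology set \<Rightarrow> complex"
  assumes "comb f" "comb g" shows "prodable (\<lambda>X Y. f X * g Y)"
proof -
  obtain L1 where L1: "goodL L1" "\<forall>Z\<in>sets borel. f Z = val L1 Z" using assms(1) unfolding comb_def by blast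
  obtain L2 where L2: "goodL L2" "\<forall>Z\<in>sets borel. g Z = val L2 Z" using assms(2) unfolding comb_def by blast
  obtain h :: "('a \<times> 'b) set \<Rightarrow> complex" where h: "comb h" "\<forall>X\<in>sets borel. \<forall>Y\<in>sets borel. h (X \<times> Y) = val L1 X * val L2 Y"
    using prodable_val[OF L1(1) L2(1)] unfolding prodable_def by blast
  show ?thesis unfolding prodable_def using h L1(2) L2(2) by (intro exI[of _ h]) auto
qed
lemma polar: "sq A v w = (sq A (w + 1 *s v) (w + 1 *s v) + \<i> * sq A (w + \<i> *s v) (w + \<i> *s v)
    - sq A (w + (-1) *s v) (w + (-1) *s v) - \<i> * sq A (w + (-\<i>) *s v) (w + (-\<i>) *s v)) / 4"
  unfolding sq_lin by (simp add: algebra_simps)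

lemma comb_cong: "comb f \<Longrightarrow> (\<And>Z. Z \<in> sets borel \<Longrightarrow> f Z = g Z) \<Longrightarrow> comb g"
  unfolding comb_def by auto

lemma comb_ca: "comb f \<Longrightarrow> ca f"
  unfolding ca_def using comb_sums by blast

lemma events_borel: "X \<in> events \<Omega> \<Longrightarrow> X \<in> sets borel"
  unfolding events_def by auto

lemma evt: "\<Omega> \<in> sets borel \<Longrightarrow> X \<in> sets borel \<Longrightarrow> X \<inter> \<Omega> \<in> events \<Omega>"
  unfolding events_def by auto

lemma obs_pos: "observable \<Omega> M \<Longrightarrow> X \<in> events \<Omega> \<Longrightarrow> pos_op (M X)"
  unfolding observable_def by blast

lemma obs_sums: "observable \<Omega> M \<Longrightarrow> (\<And>n. A n \<in> events \<Omega>) \<Longrightarrow> disjoint_family A \<Longrightarrow>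
   (\<lambda>n. cinner v (M (A n) *v w)) sums cinner v (M (\<Union>n. A n) *v w)"
  unfolding observable_def by blast

lemma obs_top: "observable \<Omega> M \<Longrightarrow> M \<Omega> = mat 1"
  unfolding observable_def by blast

lemma obs_sums': assumes "observable \<Omega> M" "\<Omega> \<in> sets borel" "\<And>n. A n \<in> sets borel" "disjoint_family A"
  shows "(\<lambda>n. sq (M (A n \<inter> \<Omega>)) v w) sums sq (M ((\<Union>n. A n) \<inter> \<Omega>)) v w"
proof -
  have "(\<lambda>n. cinner v (M (A n \<inter> \<Omega>) *v w)) sums cinner v (M (\<Union>n. A n \<inter> \<Omega>) *v w)"
    by (rule obs_sums[OF assms(1)]) (use assms(2,3,4) in \<open>auto simp: disjoint_family_on_def intro: evt\<close>)
  moreover have "(\<Union>n. A n \<inter> \<Omega>) = (\<Union>n. A n) \<inter> \<Omega>" by auto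
  ultimately show ?thesis unfolding sq_def by simp
qed

lemma comb_quad: assumes "observable \<Omega> M" "\<Omega> \<in> sets borel"
  shows "comb (\<lambda>X. sq (M (X \<inter> \<Omega>)) u u)"
proof -
  have nn: "Re (sq (M (X \<inter> \<Omega>)) u u) \<ge> 0" if "X \<in> sets borel" for X
    using pos_sq[OF obs_pos[OF assms(1) evt[OF assms(2) that]]] by blast
  have cad: "(\<lambda>n. Re (sq (M (A n \<inter> \<Omega>)) u u)) sums Re (sq (M ((\<Union>n. A n) \<inter> \<Omega>)) u u)"
    if "range A \<subseteq> sets borel" "disjoint_family A" for A :: "nat \<Rightarrow> _ set"
    using sums_Re[OF obs_sums'[OF assms, of A u u]] that by auto
  obtain N where N: "sets N = sets borel" "finite_measure N"
      "\<forall>X\<in>sets borel. measure N X = Re (sq (M (X \<inter> \<Omega>)) u u)"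
    using mk_measure[of borel "\<lambda>X. Re (sq (M (X \<inter> \<Omega>)) u u)"] nn cad by auto
  show ?thesis
  proof (rule comb_cong[OF comb_single[OF N(2) N(1)]])
    fix Z :: "'a set" assume Z: "Z \<in> sets borel"
    show "complex_of_real (measure N Z) = sq (M (Z \<inter> \<Omega>)) u u"
      using N(3) Z pos_sq_real[OF obs_pos[OF assms(1) evt[OF assms(2) Z]], of u] by simp
  qed
qed

lemma comb_entry: assumes "observable \<Omega> M" "\<Omega> \<in> sets borel"
  shows "comb (\<lambda>X. M (X \<inter> \<Omega>) $ i $ j)"
proof -
  let ?v = "axis i 1" and ?w = "axis j 1"
  let ?q = "\<lambda>c X. sq (M (X \<inter> \<Omega>)) (?w + c *s ?v) (?w + c *s ?v)"
  have "comb (\<lambda>X. (1/4) * (?q 1 X + (\<i> * ?q \<i> X + ((-1) * ?q (-1) X + (-\<i>) * ?q (-\<i>) X))))"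
    by (intro comb_scale comb_add comb_quad[OF assms])
  then show ?thesis
    by (rule comb_cong) (simp add: entry_sq[of _ i j] polar[of _ ?v ?w] algebra_simps)
qed

lemma Phi_expand: "Phi A B $ i $ j = (1 / (2 * (1 + of_nat CARD('d)))) *
   ((\<Sum>k\<in>UNIV. A$i$j * B$k$k) + (\<Sum>k\<in>UNIV. A$k$k * B$i$j) + (\<Sum>k\<in>UNIV. A$i$k * B$k$j) + (\<Sum>k\<in>UNIV. A$k$j * B$i$k))"
  for A B :: "complex^'d::finite^'d"
  unfolding Phi_def trc_def matrix_matrix_mult_def
  by (simp add: sum_distrib_left sum_distrib_right mult.commute)

lemma prodable_Phi:
  fixes A :: "'a::second_countable_topology set \<Rightarrow> complex^'d::finite^'d" and B :: "'b::second_countable_topology set \<Rightarrow> complex^'d^'d"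
  assumes cA: "\<And>i j. comb (\<lambda>X. A X $ i $ j)" and cB: "\<And>i j. comb (\<lambda>Y. B Y $ i $ j)"
  shows "prodable (\<lambda>X Y. Phi (A X) (B Y) $ i $ j)"
  unfolding Phi_expand
  by (intro prodable_scale prodable_add prodable_sum prodable_mult cA cB) simp_all

lemma cinner_mat: "cinner v (mat c *v w) = c * cinner v w"
proof -
  have "(mat c *v w) = (\<chi> i. c * w $ i)"
  proof -
    have e: "(if i = k then c else 0) * x = (if i = k then c * x else 0)" for i k and x :: complex by simp
    show ?thesis unfolding matrix_vector_mult_def mat_def by (simp add: vec_eq_iff e)
  qed
  then show ?thesis unfolding cinner_def by (simp add: sum_distrib_left mult_ac)
qed

lemma mat_entry: "mat c $ i $ j = (if i = j then c else 0)"
  unfolding mat_def by simp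

lemma trc_mat1: "trc (mat 1 :: complex^'d::finite^'d) = of_nat CARD('d)"
  unfolding trc_def mat_entry by simp

lemma Phi_11: "Phi (mat 1) (mat 1 :: complex^'d::finite^'d) = mat 1"
proof -
  have "2 * (1 + of_nat CARD('d)) \<noteq> (0::complex)"
    by (metis mult_eq_0_iff of_nat_Suc of_nat_eq_0_iff plus_1_eq_Suc zero_neq_numeral nat.distinct(1))
  then show ?thesis
    unfolding Phi_def trc_mat1 matrix_mul_lid
    by (auto simp: vec_eq_iff mat_entry field_simps)
qed

lemma Phi_margin1:
  fixes A :: "complex^'d::finite^'d"
  assumes A: "pos_op A"
  defines "lam \<equiv> (2 + real CARD('d)) / (2 * (1 + real CARD('d)))"
  shows "Phi A (mat 1) = lam *\<^sub>R A + (1 - lam) *\<^sub>R mat (complex_of_real (Re (trc A) / real CARD('d)))"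
proof (rule iffD2[OF vec_eq_iff], intro allI, rule iffD2[OF vec_eq_iff], intro allI)
  fix i j
  define d where "d = real CARD('d)"
  have d0: "d > 0" unfolding d_def by simp
  have t: "trc A = complex_of_real (Re (trc A))" by (rule trc_real(1)[OF A])
  have "Phi A (mat 1) $ i $ j = (complex_of_real d * A$i$j + trc A * (if i = j then 1 else 0) + A$i$j + A$i$j)
      / (2 * (1 + complex_of_real d))"
    unfolding Phi_def trc_mat1 matrix_mul_rid matrix_mul_lid d_def by (simp add: mat_entry)
  also have "\<dots> = complex_of_real lam * A$i$j + complex_of_real (1 - lam) * (if i = j then complex_of_real (Re (trc A) / d) else 0)"
  proof -
    define D where "D = complex_of_real d"
    have D0: "D \<noteq> 0" "1 + D \<noteq> 0" unfolding D_def using d0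
      by (auto simp: complex_eq_iff)
    have l1: "complex_of_real lam = (2 + D) / (2 * (1 + D))" unfolding lam_def D_def d_def by simp
    have l2: "complex_of_real (1 - lam) = D / (2 * (1 + D))"
    proof -
      have "1 - lam = d / (2 * (1 + d))" unfolding lam_def d_def[symmetric] using d0 by (simp add: field_simps)
      then show ?thesis unfolding D_def by simp
    qed
    have l3: "complex_of_real (Re (trc A) / d) = trc A / D" unfolding D_def by (subst t) simp
    show ?thesis unfolding l1 l2 l3 D_def[symmetric] using D0
      by (cases "i = j") (simp_all add: field_simps, simp_all add: add_divide_distrib)
  qed
  also have "\<dots> = (lam *\<^sub>R A + (1 - lam) *\<^sub>R mat (complex_of_real (Re (trc A) / real CARD('d)))) $ i $ j"
    unfolding d_def vector_add_component vector_scaleR_component mat_entry by (simp add: scaleR_conv_of_real)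
  finally show "Phi A (mat 1) $ i $ j = (lam *\<^sub>R A + (1 - lam) *\<^sub>R mat (complex_of_real (Re (trc A) / real CARD('d)))) $ i $ j" .
qed

lemma Phi_margin2:
  fixes B :: "complex^'d::finite^'d"
  assumes B: "pos_op B"
  defines "lam \<equiv> (2 + real CARD('d)) / (2 * (1 + real CARD('d)))"
  shows "Phi (mat 1) B = lam *\<^sub>R B + (1 - lam) *\<^sub>R mat (complex_of_real (Re (trc B) / real CARD('d)))"
proof -
  have "Phi (mat 1) B = Phi B (mat 1)"
    unfolding Phi_def matrix_mul_rid matrix_mul_lid by (simp add: vec_eq_iff algebra_simps)
  then show ?thesis using Phi_margin1[OF B] unfolding lam_def by simp
qed

lemma joint_exists:
  fixes \<Omega>1 :: "'a::second_countable_topology set" and \<Omega>2 :: "'b::second_countable_topology set"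
    and M1 :: "'a set \<Rightarrow> complex^'d::finite^'d" and M2 :: "'b set \<Rightarrow> complex^'d^'d"
  assumes b1: "\<Omega>1 \<in> sets borel" and b2: "\<Omega>2 \<in> sets borel"
    and o1: "observable \<Omega>1 M1" and o2: "observable \<Omega>2 M2"
  shows "\<exists>J. observable (\<Omega>1 \<times> \<Omega>2) J \<and>
     (\<forall>X\<in>sets borel. \<forall>Y\<in>sets borel. J (X \<times> Y) = Phi (M1 (X \<inter> \<Omega>1)) (M2 (Y \<inter> \<Omega>2)))"
proof -
  have pr: "\<forall>p. \<exists>h. comb h \<and> (\<forall>X\<in>sets borel. \<forall>Y\<in>sets borel.
      h (X \<times> Y) = Phi (M1 (X \<inter> \<Omega>1)) (M2 (Y \<inter> \<Omega>2)) $ fst p $ snd p)"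
  proof
    fix p :: "'d \<times> 'd"
    have "prodable (\<lambda>X Y. Phi (M1 (X \<inter> \<Omega>1)) (M2 (Y \<inter> \<Omega>2)) $ fst p $ snd p)"
      by (rule prodable_Phi[OF comb_entry[OF o1 b1] comb_entry[OF o2 b2]])
    then show "\<exists>h. comb h \<and> (\<forall>X\<in>sets borel. \<forall>Y\<in>sets borel.
      h (X \<times> Y) = Phi (M1 (X \<inter> \<Omega>1)) (M2 (Y \<inter> \<Omega>2)) $ fst p $ snd p)"
      unfolding prodable_def by blast
  qed
  obtain H where H: "\<forall>p. comb (H p) \<and> (\<forall>X\<in>sets borel. \<forall>Y\<in>sets borel.
      H p (X \<times> Y) = Phi (M1 (X \<inter> \<Omega>1)) (M2 (Y \<inter> \<Omega>2)) $ fst p $ snd p)"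
    using choice[OF pr] by blast
  define J where "J Z = (\<chi> i j. H (i, j) Z)" for Z
  have Jr: "J (X \<times> Y) = Phi (M1 (X \<inter> \<Omega>1)) (M2 (Y \<inter> \<Omega>2))"
    if "X \<in> sets borel" "Y \<in> sets borel" for X Y
    using H that unfolding J_def by (simp add: vec_eq_iff)
  have cq: "comb (\<lambda>Z. sq (J Z) v w)" for v w
  proof -
    have "comb (\<lambda>Z. \<Sum>i\<in>UNIV. \<Sum>j\<in>UNIV. (cnj (v$i) * w$j) * H (i, j) Z)"
      using H by (intro comb_sum comb_scale) auto
    then show ?thesis
      by (rule comb_cong) (simp add: sq_expand J_def mult_ac)
  qed
  have pos: "pos_op (J Z)" if Z: "Z \<in> events (\<Omega>1 \<times> \<Omega>2)" for Z
    unfolding pos_op_def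
  proof
    fix v
    define f where "f Z = sq (J Z) v v" for Z
    have caf: "ca f" unfolding f_def by (rule comb_ca[OF cq])
    have rpos: "pos_op (J (X \<times> Y))" if "X \<in> sets borel" "Y \<in> sets borel" for X Y
      unfolding Jr[OF that]
      by (rule Phi_pos[OF obs_pos[OF o1 evt[OF b1 that(1)]] obs_pos[OF o2 evt[OF b2 that(2)]]])
    have caIm: "ca (\<lambda>Z. Im (f Z))" unfolding ca_def using caD[OF caf] sums_Im by blast
    have caRe: "ca (\<lambda>Z. Re (f Z))" unfolding ca_def using caD[OF caf] sums_Re by blast
    have ca0: "ca (\<lambda>Z::('a \<times> 'b) set. 0::real)" unfolding ca_def by simp
    have ZB: "Z \<in> sets borel" using Z by (rule events_borel)
    have "Im (f Z) = 0"
      by (rule uniq[OF caIm ca0 _ ZB]) (use rpos in \<open>simp add: f_def sq_def pos_op_def\<close>)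
    moreover have "Re (f Z) \<ge> 0"
      by (rule nonneg[OF caRe _ ZB]) (use rpos in \<open>simp add: f_def sq_def pos_op_def\<close>)
    ultimately show "Im (cinner v (J Z *v v)) = 0 \<and> 0 \<le> Re (cinner v (J Z *v v))"
      unfolding f_def sq_def by simp
  qed
  have sums: "(\<lambda>n. cinner v (J (A n) *v w)) sums cinner v (J (\<Union>n. A n) *v w)"
    if "\<And>n. A n \<in> events (\<Omega>1 \<times> \<Omega>2)" "disjoint_family A" for A v w
    using comb_sums[OF cq[of v w], of A] that events_borel unfolding sq_def by blast
  have top: "J (\<Omega>1 \<times> \<Omega>2) = mat 1"
    using Jr[OF b1 b2] obs_top[OF o1] obs_top[OF o2] Phi_11 by simp
  have "observable (\<Omega>1 \<times> \<Omega>2) J"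
    unfolding observable_def using pos sums top by blast
  then show ?thesis using Jr by blast
qed

lemma restrict_events: "\<Omega> \<in> sets borel \<Longrightarrow> sets (restrict_space borel \<Omega>) = events \<Omega>"
  unfolding events_def by (auto simp: sets_restrict_space_iff)

lemma trivial_T:
  fixes \<Omega> :: "'a::topological_space set" and M :: "'a set \<Rightarrow> complex^'d::finite^'d"
  assumes b: "\<Omega> \<in> sets borel" and o: "observable \<Omega> M"
  shows "trivial_obs \<Omega> (\<lambda>X. (mat (complex_of_real (Re (trc (M X)) / real CARD('d))) :: complex^'d^'d))"
proof -
  define t where "t X = Re (trc (M X)) / real CARD('d)" for X
  have tnn: "t X \<ge> 0" if "X \<in> events \<Omega>" for X
    unfolding t_def using trc_real(2)[OF obs_pos[OF o that]] by simp
  have tsums: "(\<lambda>n. t (A n)) sums t (\<Union>n. A n)"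
    if A: "\<And>n. A n \<in> events \<Omega>" "disjoint_family A" for A
  proof -
    have "(\<lambda>n. \<Sum>i\<in>UNIV. sq (M (A n)) (axis i 1) (axis i 1)) sums (\<Sum>i\<in>UNIV. sq (M (\<Union>n. A n)) (axis i 1) (axis i 1))"
      by (intro sums_sum) (unfold sq_def, rule obs_sums[OF o A])
    then have "(\<lambda>n. trc (M (A n))) sums trc (M (\<Union>n. A n))"
      unfolding trc_def entry_sq[symmetric] .
    from sums_divide[OF sums_Re[OF this], of "real CARD('d)"] show ?thesis unfolding t_def .
  qed
  have tmat: "cinner v (mat (complex_of_real (t X)) *v w) = complex_of_real (t X) * cinner v w" for X v w
    by (rule cinner_mat)
  have top: "M \<Omega> = mat 1" by (rule obs_top[OF o])
  have t1: "t \<Omega> = 1" unfolding t_def top trc_mat1 by simp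
  have ob: "observable \<Omega> (\<lambda>X. (mat (complex_of_real (t X)) :: complex^'d^'d))"
    unfolding observable_def
  proof (intro conjI ballI allI impI)
    fix X assume X: "X \<in> events \<Omega>"
    have h: "Im (cinner v v) = 0 \<and> 0 \<le> Re (cinner v v)" for v :: "complex^'d"
      using pos_mat1 unfolding pos_op_def matrix_vector_mul_lid by blast
    show "pos_op (mat (complex_of_real (t X)) :: complex^'d^'d)"
      unfolding pos_op_def tmat
    proof
      fix v :: "complex^'d"
      show "Im (complex_of_real (t X) * cinner v v) = 0 \<and> 0 \<le> Re (complex_of_real (t X) * cinner v v)"
        using h[of v] tnn[OF X] by simp
    qed
  next
    fix A :: "nat \<Rightarrow> 'a set" and v w assume A: "\<forall>n. A n \<in> events \<Omega>" "disjoint_family A"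
    have "(\<lambda>n. complex_of_real (t (A n))) sums complex_of_real (t (\<Union>n. A n))"
      unfolding sums_of_real_iff using tsums A by blast
    from sums_mult2[OF this, of "cinner v w"]
    show "(\<lambda>n. cinner v ((mat (complex_of_real (t (A n))) :: complex^'d^'d) *v w)) sums cinner v ((mat (complex_of_real (t (\<Union>n. A n))) :: complex^'d^'d) *v w)"
      unfolding tmat .
  next
    show "(mat (complex_of_real (t \<Omega>)) :: complex^'d^'d) = mat 1" unfolding t1 by simp
  qed
  have re: "sets (restrict_space borel \<Omega>) = events \<Omega>" by (rule restrict_events[OF b])
  obtain N where N: "sets N = sets (restrict_space borel \<Omega>)" "space N = space (restrict_space borel \<Omega>)"
     "finite_measure N" "\<forall>X\<in>sets (restrict_space borel \<Omega>). measure N X = t X"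
  proof -
    have nn': "\<And>X. X \<in> sets (restrict_space borel \<Omega>) \<Longrightarrow> t X \<ge> 0" using tnn unfolding re .
    have cad: "\<And>A. range A \<subseteq> sets (restrict_space borel \<Omega>) \<Longrightarrow> disjoint_family A \<Longrightarrow> (\<lambda>n. t (A n)) sums t (\<Union>n. A n)"
      using tsums unfolding re by blast
    from mk_measure[OF nn' cad] show ?thesis using that by blast
  qed
  have spN: "space N = \<Omega>" using N(2) by (simp add: space_restrict_space)
  have "\<Omega> \<in> events \<Omega>" using b unfolding events_def by auto
  then have "measure N \<Omega> = 1" using N(4) t1 unfolding re by simp
  then have "prob_space N"
    using finite_measure.emeasure_eq_measure[OF N(3), of \<Omega>] spN by (intro prob_spaceI) simp
  moreover have "\<forall>X\<in>events \<Omega>. (mat (complex_of_real (t X)) :: complex^'d^'d) = mat (complex_of_real (measure N X))"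
    using N(4) unfolding re by simp
  ultimately show ?thesis
    unfolding trivial_obs_def t_def[symmetric] using ob N(1) spN re by blast
qed

theorem theorem1:
  fixes \<Omega>1 :: "'a::euclidean_space set" and \<Omega>2 :: "'b::euclidean_space set"
    and M1 :: "'a set \<Rightarrow> complex^'d::finite^'d" and M2 :: "'b set \<Rightarrow> complex^'d^'d"
  assumes "CARD('d) \<ge> 2"
    and "\<Omega>1 \<in> sets borel" and "\<Omega>2 \<in> sets borel"
    and "observable \<Omega>1 M1" and "observable \<Omega>2 M2"
  shows "1/2 < (2 + real CARD('d)) / (2 * (1 + real CARD('d)))
         \<and> (2 + real CARD('d)) / (2 * (1 + real CARD('d))) \<le> jmd \<Omega>1 \<Omega>2 M1 M2
         \<and> \<not> maximally_incompatible \<Omega>1 \<Omega>2 M1 M2"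
proof -
  note b1 = assms(2) and b2 = assms(3) and o1 = assms(4) and o2 = assms(5)
  define lam where "lam = (2 + real CARD('d)) / (2 * (1 + real CARD('d)))"
  have half: "1/2 < lam" unfolding lam_def by (simp add: field_simps)
  have lam01: "lam \<in> {0..1}" unfolding lam_def by (simp add: field_simps)
  define T1 where "T1 X = (mat (complex_of_real (Re (trc (M1 X)) / real CARD('d))) :: complex^'d^'d)" for X
  define T2 where "T2 Y = (mat (complex_of_real (Re (trc (M2 Y)) / real CARD('d))) :: complex^'d^'d)" for Y
  have tr1: "trivial_obs \<Omega>1 T1" unfolding T1_def by (rule trivial_T[OF b1 o1])
  have tr2: "trivial_obs \<Omega>2 T2" unfolding T2_def by (rule trivial_T[OF b2 o2])
  obtain J where J: "observable (\<Omega>1 \<times> \<Omega>2) J"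
    "\<forall>X\<in>sets borel. \<forall>Y\<in>sets borel. J (X \<times> Y) = Phi (M1 (X \<inter> \<Omega>1)) (M2 (Y \<inter> \<Omega>2))"
    using joint_exists[OF b1 b2 o1 o2] by blast
  have m1: "J (X \<times> \<Omega>2) = lam *\<^sub>R M1 X + (1 - lam) *\<^sub>R T1 X" if X: "X \<in> events \<Omega>1" for X
  proof -
    have "X \<inter> \<Omega>1 = X" "X \<in> sets borel" using X unfolding events_def by auto
    then have "J (X \<times> \<Omega>2) = Phi (M1 X) (mat 1)" using J(2) b2 obs_top[OF o2] by simp
    then show ?thesis unfolding T1_def lam_def using Phi_margin1[OF obs_pos[OF o1 X]] by simp
  qed
  have m2: "J (\<Omega>1 \<times> Y) = lam *\<^sub>R M2 Y + (1 - lam) *\<^sub>R T2 Y" if Y: "Y \<in> events \<Omega>2" for Y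
  proof -
    have "Y \<inter> \<Omega>2 = Y" "Y \<in> sets borel" using Y unfolding events_def by auto
    then have "J (\<Omega>1 \<times> Y) = Phi (mat 1) (M2 Y)" using J(2) b1 obs_top[OF o1] by simp
    then show ?thesis unfolding T2_def lam_def using Phi_margin2[OF obs_pos[OF o2 Y]] by simp
  qed
  have jm: "jointly_measurable \<Omega>1 \<Omega>2 (\<lambda>X. lam *\<^sub>R M1 X + (1 - lam) *\<^sub>R T1 X) (\<lambda>Y. lam *\<^sub>R M2 Y + (1 - lam) *\<^sub>R T2 Y)"
    unfolding jointly_measurable_def using J(1) m1 m2 by blast
  have inJ: "(lam, lam) \<in> jm_region \<Omega>1 \<Omega>2 M1 M2"
    unfolding jm_region_def using lam01 tr1 tr2 jm by blast
  define S where "S = {a. a \<in> {0..1} \<and> (a, a) \<in> jm_region \<Omega>1 \<Omega>2 M1 M2}"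
  have "lam \<in> S" unfolding S_def using inJ lam01 by blast
  moreover have "bdd_above S" unfolding S_def by (rule bdd_aboveI[of _ 1]) auto
  ultimately have "lam \<le> Sup S" by (rule cSup_upper)
  then have le: "lam \<le> jmd \<Omega>1 \<Omega>2 M1 M2" unfolding jmd_def S_def .
  have nmi: "\<not> maximally_incompatible \<Omega>1 \<Omega>2 M1 M2"
  proof
    assume "maximally_incompatible \<Omega>1 \<Omega>2 M1 M2"
    then have "(lam, lam) \<in> {(a, b). a \<in> {0..1} \<and> b \<in> {0..1} \<and> a + b \<le> 1}"
      using inJ unfolding maximally_incompatible_def by simp
    then show False using half by simp
  qed
  show ?thesis using half le nmi unfolding lam_def by blast
qed

end
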